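(* Let $\boldsymbol\mu=(\mu_0,\dots,\mu_K)\in\mathcal L$ be a single-population instance in which every arm $a$ has distribution $\mathcal N(\mu_a,\sigma^2)$ with known variance $\sigma^2>0$, arm $0$ being the control. Define $\widetilde{\boldsymbol\mu}$ by $\widetilde\mu_k=2\mu_0-\mu_k$ if $\mu_k>\mu_0$ and $\widetilde\mu_k=\mu_k$ otherwise ($k=0,\dots,K$). Then $T^\star(\boldsymbol\mu)=T^\star_{\mathrm{BAI}}(\widetilde{\boldsymbol\mu})$.
   Context: For Gaussian arms with variance $\sigma^2$, $d(x,y)=(x-y)^2/(2\sigma^2)$. $\Sigma_{K+1}$ is the probability simplex. $\mathcal S(\boldsymbol\mu)=\{a\in[K]:\mu_a>\mu_0\}$, $\mathcal L=\{\boldsymbol\mu\in\mathbb R^{K+1}:\mu_a\neq\mu_0\ \forall a\in[K]\}$, $\mathrm{Alt}(\boldsymbol\mu)=\{\boldsymbol\lambda\in\mathcal L:\mathcal S(\boldsymbol\lambda)\neq\mathcal S(\boldsymbol\mu)\}$, and the (all-arms-better-than-control) characteristic time is $T^\star(\boldsymbol\mu)^{-1}=\sup_{\mathbf w\in\Sigma_{K+1}}\inf_{\boldsymbol\lambda\in\mathrm{Alt}(\boldsymbol\mu)}\sum_{a=0}^Kw_a d(\mu_a,\lambda_a)$. For a vector $\boldsymbol\nu\in\mathbb R^{K+1}$ with a unique maximal coordinate, the best-arm-identification characteristic time is $T^\star_{\mathrm{BAI}}(\boldsymbol\nu)^{-1}=\sup_{\mathbf w\in\Sigma_{K+1}}\inf_{\boldsymbol\lambda\in\mathbb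 R^{K+1}:\ \operatorname{argmax}\boldsymbol\lambda\neq\operatorname{argmax}\boldsymbol\nu}\sum_{a=0}^Kw_a d(\nu_a,\lambda_a)$, where the infimum is over $\boldsymbol\lambda$ whose set of maximizing coordinates is not $\{\operatorname{argmax}\boldsymbol\nu\}$. *)

theory Defs
  imports "HOL-Analysis.Analysis" "HOL-Library.Extended_Real"
begin

(* Arms are indexed 0..K (arm 0 = control); instances are functions nat => real,
   only the coordinates 0..K matter. *)

definition gauss_kl :: "real \<Rightarrow> real \<Rightarrow> real \<Rightarrow> real" where
  "gauss_kl \<sigma> x y = (x - y)^2 / (2 * \<sigma>^2)"

definition prob_simplex :: "nat \<Rightarrow> (nat \<Rightarrow> real) set" where
  "prob_simplex K = {w. (\<forall>a\<in>{0..K}. 0 \<le> w a) \<and> (\<Sum>a=0..K. w a) = 1}"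

definition better_set :: "nat \<Rightarrow> (nat \<Rightarrow> real) \<Rightarrow> nat set" where
  "better_set K \<mu> = {a\<in>{1..K}. \<mu> a > \<mu> 0}"

definition in_L :: "nat \<Rightarrow> (nat \<Rightarrow> real) \<Rightarrow> bool" where
  "in_L K \<mu> \<longleftrightarrow> (\<forall>a\<in>{1..K}. \<mu> a \<noteq> \<mu> 0)"

definition Alt :: "nat \<Rightarrow> (nat \<Rightarrow> real) \<Rightarrow> (nat \<Rightarrow> real) set" where
  "Alt K \<mu> = {l. in_L K l \<and> better_set K l \<noteq> better_set K \<mu>}"

definition T_star :: "real \<Rightarrow> nat \<Rightarrow> (nat \<Rightarrow> real) \<Rightarrow> ereal" where
  "T_star \<sigma> K \<mu> = inverse (SUP w\<in>prob_simplex K. INF l\<in>Alt K \<mu>.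
       ereal (\<Sum>a=0..K. w a * gauss_kl \<sigma> (\<mu> a) (l a)))"

definition argmax_set :: "nat \<Rightarrow> (nat \<Rightarrow> real) \<Rightarrow> nat set" where
  "argmax_set K \<nu> = {a\<in>{0..K}. \<forall>b\<in>{0..K}. \<nu> b \<le> \<nu> a}"

definition Alt_BAI :: "nat \<Rightarrow> (nat \<Rightarrow> real) \<Rightarrow> (nat \<Rightarrow> real) set" where
  "Alt_BAI K \<nu> = {l. argmax_set K l \<noteq> argmax_set K \<nu>}"

definition T_star_BAI :: "real \<Rightarrow> nat \<Rightarrow> (nat \<Rightarrow> real) \<Rightarrow> ereal" where
  "T_star_BAI \<sigma> K \<nu> = inverse (SUP w\<in>prob_simplex K. INF l\<in>Alt_BAI K \<nu>.
       ereal (\<Sum>a=0..K. w a * gauss_kl \<sigma> (\<nu> a) (l a)))"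

definition mirror :: "(nat \<Rightarrow> real) \<Rightarrow> nat \<Rightarrow> real" where
  "mirror \<mu> k = (if \<mu> k > \<mu> 0 then 2 * \<mu> 0 - \<mu> k else \<mu> k)"

end

theory Submission
  imports Defs
begin

lemma gkl_nonneg: "0 \<le> gauss_kl s x y"
  by (simp add: gauss_kl_def)

lemma sum_two_le:
  fixes f :: "nat \<Rightarrow> real"
  assumes "a \<in> {1..K}" "\<forall>b\<in>{0..K}. 0 \<le> f b"
  shows "f 0 + f a \<le> (\<Sum>b=0..K. f b)"
proof -
  have "(\<Sum>b\<in>{0,a}. f b) \<le> (\<Sum>b=0..K. f b)"
    by (rule sum_mono2) (use assms in auto)
  moreover have "(\<Sum>b\<in>{0,a}. f b) = f 0 + f a" using assms by auto
  ultimately show ?thesis by simp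
qed

lemma sum_two_eq:
  fixes f :: "nat \<Rightarrow> real"
  assumes "a \<in> {1..K}" "\<forall>b\<in>{0..K}. b \<noteq> 0 \<longrightarrow> b \<noteq> a \<longrightarrow> f b = 0"
  shows "(\<Sum>b=0..K. f b) = f 0 + f a"
proof -
  have "(\<Sum>b\<in>{0,a}. f b) = (\<Sum>b=0..K. f b)"
    by (rule sum.mono_neutral_left) (use assms in auto)
  moreover have "(\<Sum>b\<in>{0,a}. f b) = f 0 + f a" using assms by auto
  ultimately show ?thesis by simp
qed

lemma alt_bai_iff:
  assumes "a \<in> {1..K}" "l 0 \<le> l a"
  shows "argmax_set K l \<noteq> {0}"
proof
  assume h: "argmax_set K l = {0}"
  then have "0 \<in> argmax_set K l" by simp
  then have "\<forall>b\<in>{0..K}. l b \<le> l 0" unfolding argmax_set_def by auto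
  with assms have "a \<in> argmax_set K l" unfolding argmax_set_def by fastforce
  with h assms show False by auto
qed

lemma alt_bai_ex:
  assumes "argmax_set K l \<noteq> {0}"
  shows "\<exists>a\<in>{1..K}. l 0 \<le> l a"
proof (cases "0 \<in> argmax_set K l")
  case True
  then obtain a where "a \<in> argmax_set K l" "a \<noteq> 0" using assms by blast
  then have "a \<in> {1..K}" "l 0 \<le> l a" using True unfolding argmax_set_def by auto
  then show ?thesis by blast
next
  case False
  then obtain b where "b \<in> {0..K}" "\<not> l b \<le> l 0" unfolding argmax_set_def by auto
  then show ?thesis by (intro bexI[of _ b]) (auto, cases b, auto)
qed

lemma approx:
  fixes \<mu> :: "nat \<Rightarrow> real"
  assumes "\<sigma> > 0" "in_L K \<mu>" "a \<in> {1..K}" "e > 0"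
    and "(\<mu> a > \<mu> 0 \<and> Y \<le> X) \<or> (\<mu> a < \<mu> 0 \<and> X \<le> Y)"
  shows "\<exists>l\<in>Alt K \<mu>. (\<Sum>b=0..K. w b * gauss_kl \<sigma> (\<mu> b) (l b))
           \<le> w 0 * gauss_kl \<sigma> (\<mu> 0) X + w a * gauss_kl \<sigma> (\<mu> a) Y + e"
proof -
  define s where "s = (if \<mu> a > \<mu> 0 then 1 else -1::real)"
  define g where "g t = w 0 * gauss_kl \<sigma> (\<mu> 0) t" for t
  have "continuous (at X) g" unfolding g_def gauss_kl_def
    using assms(1) by (intro continuous_intros) auto
  then obtain \<eta> where eta: "\<eta> > 0" "\<forall>t. dist t X < \<eta> \<longrightarrow> dist (g t) (g X) < e"
    using assms(4) unfolding continuous_at_eps_delta by blast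
  have "infinite ({0<..<\<eta>} - (\<lambda>z. s * (z - X)) ` \<mu> ` {1..K})"
    by (rule Diff_infinite_finite) (use eta in auto)
  then obtain \<delta> where d: "\<delta> \<in> {0<..<\<eta>}" "\<delta> \<notin> (\<lambda>z. s * (z - X)) ` \<mu> ` {1..K}"
    by (metis (no_types, lifting) Diff_iff ex_in_conv finite.emptyI)
  have s2: "s * s = 1" unfolding s_def by auto
  have nb: "\<mu> b \<noteq> X + s * \<delta>" if "b \<in> {1..K}" for b
  proof
    assume "\<mu> b = X + s * \<delta>"
    then have "s * (\<mu> b - X) = s * s * \<delta>" by (simp add: algebra_simps)
    then have "\<delta> = s * (\<mu> b - X)" using s2 by simp
    with d(2) that show False by auto
  qed
  define l where "l b = (if b = 0 then X + s * \<delta> else if b = a then Y else \<mu> b)" for b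
  have a0: "a \<noteq> 0" using assms(3) by auto
  have YX: "Y \<noteq> X + s * \<delta>" and flip: "(Y > X + s * \<delta>) \<noteq> (\<mu> a > \<mu> 0)"
    using assms(5) d(1) unfolding s_def by auto
  have "in_L K l" unfolding in_L_def l_def using nb YX a0 by auto
  moreover have "better_set K l \<noteq> better_set K \<mu>"
  proof
    assume "better_set K l = better_set K \<mu>"
    then have "(a \<in> better_set K l) = (a \<in> better_set K \<mu>)" by simp
    then show False using flip assms(3) a0 unfolding better_set_def l_def by auto
  qed
  ultimately have lA: "l \<in> Alt K \<mu>" unfolding Alt_def by auto
  have "(\<Sum>b=0..K. w b * gauss_kl \<sigma> (\<mu> b) (l b))
       = w 0 * gauss_kl \<sigma> (\<mu> 0) (l 0) + w a * gauss_kl \<sigma> (\<mu> a) (l a)"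
    by (rule sum_two_eq[OF assms(3)]) (auto simp: l_def gauss_kl_def)
  also have "\<dots> = g (X + s * \<delta>) + w a * gauss_kl \<sigma> (\<mu> a) Y"
    using a0 by (simp add: l_def g_def)
  also have "\<dots> \<le> g X + e + w a * gauss_kl \<sigma> (\<mu> a) Y"
  proof -
    have "dist (X + s * \<delta>) X < \<eta>" using d(1) unfolding s_def dist_real_def by auto
    then have "dist (g (X + s * \<delta>)) (g X) < e" using eta by blast
    then show ?thesis unfolding dist_real_def by auto
  qed
  finally show ?thesis using lA unfolding g_def by (intro bexI[of _ l]) auto
qed

lemma mirror_facts:
  assumes "in_L K \<mu>"
  shows "mirror \<mu> 0 = \<mu> 0" "argmax_set K (mirror \<mu>) = {0}"
proof -
  show m0: "mirror \<mu> 0 = \<mu> 0" unfolding mirror_def by simp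
  have lt: "mirror \<mu> b < \<mu> 0" if "b \<in> {1..K}" for b
    using assms that unfolding in_L_def mirror_def by (cases "\<mu> b > \<mu> 0") fastforce+
  show "argmax_set K (mirror \<mu>) = {0}"
  proof
    show "argmax_set K (mirror \<mu>) \<subseteq> {0}"
    proof
      fix b assume "b \<in> argmax_set K (mirror \<mu>)"
      then have "b \<in> {0..K}" "mirror \<mu> 0 \<le> mirror \<mu> b" unfolding argmax_set_def by auto
      then show "b \<in> {0}" using lt[of b] m0 by (cases b) auto
    qed
    show "{0} \<subseteq> argmax_set K (mirror \<mu>)"
    proof -
      have "mirror \<mu> b \<le> mirror \<mu> 0" if "b \<in> {0..K}" for b
      proof (cases "b = 0")
        case False
        then have "b \<in> {1..K}" using that by auto
        then show ?thesis using lt m0 by force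
      qed simp
      then show ?thesis unfolding argmax_set_def by auto
    qed
  qed
qed

lemma inf_eq:
  fixes \<mu> :: "nat \<Rightarrow> real"
  assumes "\<sigma> > 0" "in_L K \<mu>" "w \<in> prob_simplex K"
  shows "(INF l\<in>Alt K \<mu>. ereal (\<Sum>a=0..K. w a * gauss_kl \<sigma> (\<mu> a) (l a)))
       = (INF l\<in>Alt_BAI K (mirror \<mu>). ereal (\<Sum>a=0..K. w a * gauss_kl \<sigma> (mirror \<mu> a) (l a)))"
    (is "?A = ?B")
proof (rule antisym)
  have w0: "\<forall>b\<in>{0..K}. 0 \<le> w b" using assms(3) unfolding prob_simplex_def by auto
  note mf = mirror_facts[OF assms(2)]
  show "?B \<le> ?A"
  proof (rule INF_mono)
    fix lam assume "lam \<in> Alt K \<mu>"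
    then have inl: "in_L K lam" and bs: "better_set K lam \<noteq> better_set K \<mu>"
      unfolding Alt_def by auto
    obtain a where a: "a \<in> {1..K}" "(lam a > lam 0) \<noteq> (\<mu> a > \<mu> 0)"
    proof -
      have "\<exists>a\<in>{1..K}. (lam a > lam 0) \<noteq> (\<mu> a > \<mu> 0)"
        using bs unfolding better_set_def by auto
      then show ?thesis using that by blast
    qed
    have a0: "a \<noteq> 0" using a by auto
    have ma: "\<mu> a \<noteq> \<mu> 0" using assms(2) a unfolding in_L_def by auto
    have lower: "w 0 * gauss_kl \<sigma> (\<mu> 0) (lam 0) + w a * gauss_kl \<sigma> (\<mu> a) (lam a)
        \<le> (\<Sum>b=0..K. w b * gauss_kl \<sigma> (\<mu> b) (lam b))"
      by (rule sum_two_le[OF a(1)]) (use w0 gkl_nonneg in auto)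
    show "\<exists>l\<in>Alt_BAI K (mirror \<mu>). ereal (\<Sum>a=0..K. w a * gauss_kl \<sigma> (mirror \<mu> a) (l a))
           \<le> ereal (\<Sum>a=0..K. w a * gauss_kl \<sigma> (\<mu> a) (lam a))"
    proof (cases "\<mu> a > \<mu> 0")
      case True
      define l where "l b = (if b = 0 then 2 * \<mu> 0 - lam 0 else if b = a then 2 * \<mu> 0 - lam a else mirror \<mu> b)" for b
      have "l 0 \<le> l a" using True a a0 unfolding l_def by auto
      then have lA: "l \<in> Alt_BAI K (mirror \<mu>)" unfolding Alt_BAI_def using alt_bai_iff[OF a(1)] mf by auto
      have "(\<Sum>b=0..K. w b * gauss_kl \<sigma> (mirror \<mu> b) (l b))
         = w 0 * gauss_kl \<sigma> (mirror \<mu> 0) (l 0) + w a * gauss_kl \<sigma> (mirror \<mu> a) (l a)"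
        by (rule sum_two_eq[OF a(1)]) (auto simp: l_def gauss_kl_def)
      also have "\<dots> = w 0 * gauss_kl \<sigma> (\<mu> 0) (lam 0) + w a * gauss_kl \<sigma> (\<mu> a) (lam a)"
        using True a0 unfolding l_def mirror_def gauss_kl_def by (simp add: power2_eq_square algebra_simps)
      finally show ?thesis using lower lA by (intro bexI[of _ l]) auto
    next
      case False
      define l where "l b = (if b = 0 then lam 0 else if b = a then lam a else mirror \<mu> b)" for b
      have "l 0 \<le> l a" using False a a0 ma unfolding l_def by auto
      then have lA: "l \<in> Alt_BAI K (mirror \<mu>)" unfolding Alt_BAI_def using alt_bai_iff[OF a(1)] mf by auto
      have "(\<Sum>b=0..K. w b * gauss_kl \<sigma> (mirror \<mu> b) (l b))
         = w 0 * gauss_kl \<sigma> (mirror \<mu> 0) (l 0) + w a * gauss_kl \<sigma> (mirror \<mu> a) (l a)"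
        by (rule sum_two_eq[OF a(1)]) (auto simp: l_def gauss_kl_def)
      also have "\<dots> = w 0 * gauss_kl \<sigma> (\<mu> 0) (lam 0) + w a * gauss_kl \<sigma> (\<mu> a) (lam a)"
        using False a0 unfolding l_def mirror_def by simp
      finally show ?thesis using lower lA by (intro bexI[of _ l]) auto
    qed
  qed
  show "?A \<le> ?B"
  proof (rule INF_greatest)
    fix l assume "l \<in> Alt_BAI K (mirror \<mu>)"
    then have "argmax_set K l \<noteq> {0}" using mf unfolding Alt_BAI_def by auto
    then obtain a where a: "a \<in> {1..K}" "l 0 \<le> l a" using alt_bai_ex by blast
    have a0: "a \<noteq> 0" using a by auto
    have ma: "\<mu> a \<noteq> \<mu> 0" using assms(2) a unfolding in_L_def by auto
    have lower: "w 0 * gauss_kl \<sigma> (mirror \<mu> 0) (l 0) + w a * gauss_kl \<sigma> (mirror \<mu> a) (l a)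
        \<le> (\<Sum>b=0..K. w b * gauss_kl \<sigma> (mirror \<mu> b) (l b))"
      by (rule sum_two_le[OF a(1)]) (use w0 gkl_nonneg in auto)
    obtain X Y where XY: "(\<mu> a > \<mu> 0 \<and> Y \<le> X) \<or> (\<mu> a < \<mu> 0 \<and> X \<le> Y)"
      and eq: "w 0 * gauss_kl \<sigma> (\<mu> 0) X + w a * gauss_kl \<sigma> (\<mu> a) Y
         = w 0 * gauss_kl \<sigma> (mirror \<mu> 0) (l 0) + w a * gauss_kl \<sigma> (mirror \<mu> a) (l a)"
    proof (cases "\<mu> a > \<mu> 0")
      case True
      show ?thesis
        by (rule that[where X="2 * \<mu> 0 - l 0" and Y="2 * \<mu> 0 - l a"])
          (use True a in \<open>auto simp: mirror_def gauss_kl_def power2_eq_square algebra_simps\<close>)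
    next
      case False
      show ?thesis
        by (rule that[where X="l 0" and Y="l a"]) (use False a ma in \<open>auto simp: mirror_def\<close>)
    qed
    show "?A \<le> ereal (\<Sum>b=0..K. w b * gauss_kl \<sigma> (mirror \<mu> b) (l b))"
    proof (rule ereal_le_epsilon2)
      fix e :: real assume "0 < e"
      obtain lam where lam: "lam \<in> Alt K \<mu>" "(\<Sum>b=0..K. w b * gauss_kl \<sigma> (\<mu> b) (lam b))
           \<le> w 0 * gauss_kl \<sigma> (\<mu> 0) X + w a * gauss_kl \<sigma> (\<mu> a) Y + e"
        using approx[OF assms(1,2) a(1) \<open>0 < e\<close> XY] by blast
      have "?A \<le> ereal (\<Sum>b=0..K. w b * gauss_kl \<sigma> (\<mu> b) (lam b))"
        by (rule INF_lower) (rule lam(1))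
      also have "\<dots> \<le> ereal ((\<Sum>b=0..K. w b * gauss_kl \<sigma> (mirror \<mu> b) (l b)) + e)"
        using lam(2) eq lower by simp
      finally show "?A \<le> ereal (\<Sum>b=0..K. w b * gauss_kl \<sigma> (mirror \<mu> b) (l b)) + ereal e"
        by simp
    qed
  qed
qed

theorem lemma1:
  fixes K :: nat and \<sigma> :: real and \<mu> :: "nat \<Rightarrow> real"
  assumes "\<sigma> > 0" and "in_L K \<mu>"
  shows "T_star \<sigma> K \<mu> = T_star_BAI \<sigma> K (mirror \<mu>)"
  unfolding T_star_def T_star_BAI_def
  using inf_eq[OF assms] by (simp cong: SUP_cong)

end
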